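(* Let $G=(V,R,E)$ be a finite bipartite version–record graph with version tree $\mathbb{T}$ satisfying the standing assumptions below, and let $0<\delta\le1$. Then the algorithm LyreSplit with parameter $\delta$ (described below) outputs a partition of $V$ into blocks $\mathcal{V}_1,\dots,\mathcal{V}_K$ whose storage cost satisfies $\mathcal{S}=\sum_k|\mathcal{R}_k|\le(1+\delta)^{\ell}|R|$ and whose average checkout cost satisfies $\mathcal{C}_{avg}=\frac{1}{|V|}\sum_k|\mathcal{V}_k||\mathcal{R}_k|\le\frac{1}{\delta}\cdot\frac{|E|}{|V|}$; i.e., it is a $((1+\delta)^{\ell},\frac1\delta)$-approximation, where $\ell$ is the recursion level at which the algorithm terminates.
   Context: $(v,r)\in E$ means version $v$ contains record $r$; $R(v)=\{r:(v,r)\in E\}$ and $R=\bigcup_v R(v)$. $\mathbb{T}$ is a rooted tree on $V$ (edges parent$\to$child) with edge weights $w(v_i,v_j)=|R(v_i)\cap R(v_j)|$. Standing assumption (no cross-version diff rule): for every record $r$, the set of versions containing $r$ is a connected subtree of $\mathbb{T}$. For a block $\mathcal{V}_k$, $\mathcal{R}_k=\bigcup_{v\in\mathcal{V}_k}R(v)$. LyreSplit on a subtree with version set $V'$, record set $R'=\bigcup_{v\in V'}R(v)$ and bipartite edge count $|E'|=\sum_{v\in V'}|R(v)|$: if $|R'||V'|<|E'|/\delta$, return $V'$ as a single block; otherwise pick any tree edge $e$ of the subtree with $w(e)\le\delta|R'|$ (such an edge exists), remove it to split the subtree into two subtrees, and recursively apply LyreSplit to each, returning the union of the resulting blocks. The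 initial call on the whole tree is at recursion level $0$, and its recursive calls are at level $1$, etc.; $\ell$ denotes the largest recursion level reached. An algorithm is an $(X,Y)$-approximation if its storage cost is at most $X\cdot|R|$ and its average checkout cost is at most $Y\cdot\frac{|E|}{|V|}$. *)

theory Defs
  imports Complex_Main
begin

text \<open>A version-record bipartite graph is given by
  a finite version set V and the record-set map Rv :: 'v => 'r set, so that
  (v,r) in E iff r in Rv v.  The version tree is a set of directed edges (parent, child).\<close>

definition rooted_tree :: "'v set \<Rightarrow> ('v \<times> 'v) set \<Rightarrow> 'v \<Rightarrow> bool" where
  "rooted_tree V T rt \<longleftrightarrow> finite V \<and> rt \<in> V \<and> T \<subseteq> V \<times> V
     \<and> (\<forall>v\<in>V. (rt, v) \<in> T\<^sup>*) \<and> (\<forall>u. (u, rt) \<notin> T)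
     \<and> (\<forall>v\<in>V - {rt}. \<exists>!u. (u, v) \<in> T)"

definition und_edges :: "('v \<times> 'v) set \<Rightarrow> 'v set \<Rightarrow> ('v \<times> 'v) set" where
  "und_edges T S = {(x, y). x \<in> S \<and> y \<in> S \<and> ((x, y) \<in> T \<or> (y, x) \<in> T)}"

definition connected_in :: "('v \<times> 'v) set \<Rightarrow> 'v set \<Rightarrow> bool" where
  "connected_in T S \<longleftrightarrow> (\<forall>x\<in>S. \<forall>y\<in>S. (x, y) \<in> (und_edges T S)\<^sup>*)"

definition recs :: "('v \<Rightarrow> 'r set) \<Rightarrow> 'v set \<Rightarrow> 'r set" where
  "recs Rv S = (\<Union>v\<in>S. Rv v)"

definition num_edges :: "('v \<Rightarrow> 'r set) \<Rightarrow> 'v set \<Rightarrow> nat" where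
  "num_edges Rv S = (\<Sum>v\<in>S. card (Rv v))"

definition weight :: "('v \<Rightarrow> 'r set) \<Rightarrow> 'v \<Rightarrow> 'v \<Rightarrow> nat" where
  "weight Rv u v = card (Rv u \<inter> Rv v)"

definition side :: "('v \<times> 'v) set \<Rightarrow> 'v set \<Rightarrow> 'v \<Rightarrow> 'v \<Rightarrow> 'v set" where
  "side T S a b = {x \<in> S. (a, x) \<in> (und_edges T S - {(a, b), (b, a)})\<^sup>*}"

text \<open>LyreSplit as a (nondeterministic) relation:
  lyresplit \<delta> T Rv S d B l  means: the call of LyreSplit on the subtree with version set S,
  made at recursion level d, can return the set of blocks B, where l is the largest recursion
  level reached within this call.\<close>
inductive lyresplit :: "real \<Rightarrow> ('v \<times> 'v) set \<Rightarrow> ('v \<Rightarrow> 'r set) \<Rightarrow> 'v set \<Rightarrow> nat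
    \<Rightarrow> 'v set set \<Rightarrow> nat \<Rightarrow> bool" for \<delta> T Rv where
  stop: "real (card (recs Rv S) * card S) < real (num_edges Rv S) / \<delta>
         \<Longrightarrow> lyresplit \<delta> T Rv S d {S} d"
| split: "\<not> real (card (recs Rv S) * card S) < real (num_edges Rv S) / \<delta>
         \<Longrightarrow> (a, b) \<in> T \<Longrightarrow> a \<in> S \<Longrightarrow> b \<in> S
         \<Longrightarrow> real (weight Rv a b) \<le> \<delta> * real (card (recs Rv S))
         \<Longrightarrow> S1 = side T S a b \<Longrightarrow> S2 = S - S1
         \<Longrightarrow> lyresplit \<delta> T Rv S1 (Suc d) B1 l1
         \<Longrightarrow> lyresplit \<delta> T Rv S2 (Suc d) B2 l2
         \<Longrightarrow> lyresplit \<delta> T Rv S d (B1 \<union> B2) (max l1 l2)"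

end

theory Submission
  imports Defs
begin

definition tdist :: "('v \<times> 'v) set \<Rightarrow> 'v \<Rightarrow> 'v \<Rightarrow> nat" where
  "tdist T rt x = (LEAST n. (rt, x) \<in> T ^^ n)"

lemma depth_lt:
  assumes tree: "rooted_tree V T rt" and e: "(u, v) \<in> T"
  shows "tdist T rt u < tdist T rt v"
proof -
  from tree have sub: "T \<subseteq> V \<times> V" and reach: "\<forall>v\<in>V. (rt, v) \<in> T\<^sup>*"
    and noroot: "\<forall>u. (u, rt) \<notin> T" and uniq: "\<forall>v\<in>V - {rt}. \<exists>!u. (u, v) \<in> T"
    by (auto simp: rooted_tree_def)
  have vV: "v \<in> V" using e sub by auto
  have vrt: "v \<noteq> rt" using e noroot by auto
  obtain n where "(rt, v) \<in> T ^^ n" using reach vV rtrancl_power by blast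
  hence P: "(rt, v) \<in> T ^^ tdist T rt v" unfolding tdist_def by (rule LeastI)
  show ?thesis
  proof (cases "tdist T rt v")
    case 0 thus ?thesis using P vrt by simp
  next
    case (Suc k)
    with P obtain w where w1: "(rt, w) \<in> T ^^ k" and w2: "(w, v) \<in> T" by auto
    have "w = u" using uniq vV vrt w2 e by blast
    hence "tdist T rt u \<le> k" using w1 unfolding tdist_def by (auto intro: Least_le)
    thus ?thesis using Suc by simp
  qed
qed

lemma no_back:
  assumes tree: "rooted_tree V T rt" and ab: "(a, b) \<in> T"
  shows "(b, a) \<notin> T\<^sup>*"
proof
  assume "(b, a) \<in> T\<^sup>*"
  hence "tdist T rt b \<le> tdist T rt a"
    by (induction rule: rtrancl_induct) (auto dest: depth_lt[OF tree])
  moreover have "tdist T rt a < tdist T rt b" using depth_lt[OF tree ab] .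
  ultimately show False by simp
qed

lemma cross:
  assumes tree: "rooted_tree V T rt" and ab: "(a, b) \<in> T"
    and e: "(u, v) \<in> T \<or> (v, u) \<in> T" and u: "(b, u) \<notin> T\<^sup>*" and v: "(b, v) \<in> T\<^sup>*"
  shows "u = a \<and> v = b"
proof -
  from tree have sub: "T \<subseteq> V \<times> V"
    and noroot: "\<forall>u. (u, rt) \<notin> T" and uniq: "\<forall>v\<in>V - {rt}. \<exists>!u. (u, v) \<in> T"
    by (auto simp: rooted_tree_def)
  show ?thesis
  proof (cases "(v, u) \<in> T")
    case True thus ?thesis using u v by (meson rtrancl_into_rtrancl)
  next
    case False
    hence uv: "(u, v) \<in> T" using e by auto
    have vV: "v \<in> V" using uv sub by auto
    have vrt: "v \<noteq> rt" using uv noroot by auto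
    from v show ?thesis
    proof (cases rule: rtranclE)
      case base thus ?thesis using uniq vV vrt uv ab by blast
    next
      case (step w)
      hence "w = u" using uniq vV vrt uv by blast
      thus ?thesis using step u by simp
    qed
  qed
qed

lemma und_rtr_sym: "(x, y) \<in> (und_edges T S)\<^sup>* \<Longrightarrow> (y, x) \<in> (und_edges T S)\<^sup>*"
proof (induction rule: rtrancl_induct)
  case base thus ?case by simp
next
  case (step y z)
  hence "(z, y) \<in> und_edges T S" by (auto simp: und_edges_def)
  thus ?case using step by (meson converse_rtrancl_into_rtrancl)
qed

lemma conn_from:
  assumes "\<forall>y\<in>S. (c, y) \<in> (und_edges T S)\<^sup>*"
  shows "connected_in T S"
  unfolding connected_in_def
  using assms und_rtr_sym by (meson rtrancl_trans)

lemma restrict_conn: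
  assumes conn: "connected_in T S" and c: "c \<in> S" "c \<in> P"
    and cr: "\<And>u v. (u, v) \<in> und_edges T S \<Longrightarrow> u \<notin> P \<Longrightarrow> v \<in> P \<Longrightarrow> v = c"
  shows "connected_in T (S \<inter> P)"
proof -
  have "(c, z) \<in> (und_edges T S)\<^sup>* \<Longrightarrow> z \<in> P \<Longrightarrow> (c, z) \<in> (und_edges T (S \<inter> P))\<^sup>*" for z
  proof (induction rule: rtrancl_induct)
    case base thus ?case by simp
  next
    case (step y z)
    show ?case
    proof (cases "y \<in> P")
      case True
      with step have "(y, z) \<in> und_edges T (S \<inter> P)" by (auto simp: und_edges_def)
      thus ?thesis using step True by (meson rtrancl_into_rtrancl)
    next
      case False
      hence "z = c" using cr step by blast
      thus ?thesis by simp
    qed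
  qed
  thus ?thesis using conn c by (intro conn_from[of _ c]) (auto simp: connected_in_def)
qed

lemma exists_cross:
  "(x, y) \<in> R\<^sup>* \<Longrightarrow> x \<notin> D \<Longrightarrow> y \<in> D \<Longrightarrow> \<exists>u v. (u, v) \<in> R \<and> u \<notin> D \<and> v \<in> D"
  by (induction rule: rtrancl_induct) auto

lemma split_facts:
  assumes tree: "rooted_tree V T rt" and ab: "(a, b) \<in> T" and a: "a \<in> S" and b: "b \<in> S"
    and conn: "connected_in T S"
  defines "D \<equiv> {x. (b, x) \<in> T\<^sup>*}"
  shows "side T S a b = S - D" "connected_in T (S - D)" "connected_in T (S \<inter> D)" "a \<notin> D"
proof -
  have crs: "u = a \<and> v = b" if "(u, v) \<in> T \<or> (v, u) \<in> T" "u \<notin> D" "v \<in> D" for u v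
  proof -
    have "(b, u) \<notin> T\<^sup>*" "(b, v) \<in> T\<^sup>*" using that(2,3) unfolding D_def by auto
    thus ?thesis using cross[OF tree ab that(1)] by blast
  qed
  show aD: "a \<notin> D" using no_back[OF tree ab] unfolding D_def by simp
  have bD: "b \<in> D" unfolding D_def by simp
  have c1: "connected_in T (S \<inter> - D)"
  proof (rule restrict_conn[OF conn a])
    show "a \<in> - D" using aD by simp
    fix u v assume "(u, v) \<in> und_edges T S" "u \<notin> - D" "v \<in> - D"
    hence "(v, u) \<in> T \<or> (u, v) \<in> T" "v \<notin> D" "u \<in> D" by (auto simp: und_edges_def)
    thus "v = a" using crs by blast
  qed
  thus c1': "connected_in T (S - D)" by (simp add: Diff_eq)
  show "connected_in T (S \<inter> D)"
  proof (rule restrict_conn[OF conn b bD])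
    fix u v assume "(u, v) \<in> und_edges T S" "u \<notin> D" "v \<in> D"
    hence "(u, v) \<in> T \<or> (v, u) \<in> T" "u \<notin> D" "v \<in> D" by (auto simp: und_edges_def)
    thus "v = b" using crs by blast
  qed
  show "side T S a b = S - D"
  proof
    show "side T S a b \<subseteq> S - D"
    proof
      fix x assume x: "x \<in> side T S a b"
      hence xS: "x \<in> S" and p: "(a, x) \<in> (und_edges T S - {(a, b), (b, a)})\<^sup>*"
        by (auto simp: side_def)
      from p have "x \<notin> D"
      proof (induction rule: rtrancl_induct)
        case base thus ?case using aD .
      next
        case (step y z)
        show ?case
        proof
          assume zD: "z \<in> D"
          from step(2) have "(y, z) \<in> T \<or> (z, y) \<in> T" "(y, z) \<noteq> (a, b)"
            by (auto simp: und_edges_def)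
          thus False using crs[of y z] zD step(3) by blast
        qed
      qed
      thus "x \<in> S - D" using xS by simp
    qed
  next
    show "S - D \<subseteq> side T S a b"
    proof
      fix x assume x: "x \<in> S - D"
      hence "(a, x) \<in> (und_edges T (S - D))\<^sup>*" using c1' a aD by (auto simp: connected_in_def)
      moreover have "und_edges T (S - D) \<subseteq> und_edges T S - {(a, b), (b, a)}"
        using bD by (auto simp: und_edges_def)
      ultimately have "(a, x) \<in> (und_edges T S - {(a, b), (b, a)})\<^sup>*"
        using rtrancl_mono by blast
      thus "x \<in> side T S a b" using x by (auto simp: side_def)
    qed
  qed
qed


lemma inter_sub:
  assumes tree: "rooted_tree V T rt" and ab: "(a, b) \<in> T" and a: "a \<in> S" and b: "b \<in> S"
    and conn: "connected_in T S" and SV: "S \<subseteq> V"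
    and subtree: "\<forall>r\<in>recs Rv V. connected_in T {v \<in> V. r \<in> Rv v}"
  shows "recs Rv (side T S a b) \<inter> recs Rv (S - side T S a b) \<subseteq> Rv a \<inter> Rv b"
proof
  define D where "D = {x. (b, x) \<in> T\<^sup>*}"
  have s1: "side T S a b = S - D" using split_facts(1)[OF tree ab a b conn] unfolding D_def .
  have s2: "S - side T S a b = S \<inter> D" using s1 by auto
  fix r assume r: "r \<in> recs Rv (side T S a b) \<inter> recs Rv (S - side T S a b)"
  then obtain x y where x: "x \<in> S - D" "r \<in> Rv x" and y: "y \<in> S \<inter> D" "r \<in> Rv y"
    unfolding s1 s2 recs_def by blast
  define C where "C = {v \<in> V. r \<in> Rv v}"
  have "r \<in> recs Rv V" using x SV unfolding recs_def by blast
  hence "connected_in T C" using subtree unfolding C_def by blast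
  moreover have "x \<in> C" "y \<in> C" using x y SV unfolding C_def by auto
  ultimately have "(x, y) \<in> (und_edges T C)\<^sup>*" unfolding connected_in_def by blast
  then obtain u v where uv: "(u, v) \<in> und_edges T C" "u \<notin> D" "v \<in> D"
    using exists_cross[of x y _ D] x y by blast
  hence e: "(u, v) \<in> T \<or> (v, u) \<in> T" and uvC: "u \<in> C" "v \<in> C"
    by (auto simp: und_edges_def)
  have "(b, u) \<notin> T\<^sup>*" "(b, v) \<in> T\<^sup>*" using uv unfolding D_def by auto
  hence "u = a \<and> v = b" using cross[OF tree ab e] by blast
  thus "r \<in> Rv a \<inter> Rv b" using uvC unfolding C_def by auto
qed

lemma finite_recs: "finite S \<Longrightarrow> \<forall>v\<in>S. finite (Rv v) \<Longrightarrow> finite (recs Rv S)"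
  unfolding recs_def by auto

lemma main:
  assumes run: "lyresplit \<delta> T Rv S d B l"
    and finV: "finite V" and finR: "\<forall>v\<in>V. finite (Rv v)"
    and tree: "rooted_tree V T rt"
    and subtree: "\<forall>r\<in>recs Rv V. connected_in T {v \<in> V. r \<in> Rv v}"
    and dpos: "0 < \<delta>"
  shows "S \<subseteq> V \<Longrightarrow> connected_in T S \<Longrightarrow>
    \<Union>B = S \<and> (\<forall>X\<in>B. X \<noteq> {}) \<and> (\<forall>X\<in>B. \<forall>Y\<in>B. X \<noteq> Y \<longrightarrow> X \<inter> Y = {}) \<and> finite B \<and> d \<le> l
    \<and> real (\<Sum>X\<in>B. card (recs Rv X)) \<le> (1 + \<delta>) ^ (l - d) * real (card (recs Rv S))
    \<and> (\<Sum>X\<in>B. real (card X) * real (card (recs Rv X))) \<le> real (num_edges Rv S) / \<delta>"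
  using run
proof (induction rule: lyresplit.induct)
  case (stop S d)
  have "S \<noteq> {}"
  proof
    assume "S = {}"
    with stop.hyps show False by (simp add: num_edges_def)
  qed
  moreover have "real (card S) * real (card (recs Rv S)) \<le> real (num_edges Rv S) / \<delta>"
    using stop.hyps by (simp add: mult.commute)
  ultimately show ?case by simp
next
  case (split S a b S1 S2 d B1 l1 B2 l2)
  define D where "D = {x. (b, x) \<in> T\<^sup>*}"
  have sf: "side T S a b = S - D" "connected_in T (S - D)" "connected_in T (S \<inter> D)"
    using split_facts[OF tree split.hyps(2,3,4) split.prems(2)] unfolding D_def by auto
  have S1: "S1 = S - D" using sf split.hyps by simp
  have S2: "S2 = S \<inter> D" using S1 split.hyps by auto
  have SV1: "S1 \<subseteq> V" "S2 \<subseteq> V" using S1 S2 split.prems(1) by auto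
  note I1 = split.IH(1)[OF SV1(1) sf(2)[folded S1]]
  note I2 = split.IH(2)[OF SV1(2) sf(3)[folded S2]]
  from I1 have U1: "\<Union>B1 = S1" and N1: "\<forall>X\<in>B1. X \<noteq> {}"
    and D1: "\<forall>X\<in>B1. \<forall>Y\<in>B1. X \<noteq> Y \<longrightarrow> X \<inter> Y = {}" and F1: "finite B1" and L1: "Suc d \<le> l1"
    and St1: "real (\<Sum>X\<in>B1. card (recs Rv X)) \<le> (1 + \<delta>) ^ (l1 - Suc d) * real (card (recs Rv S1))"
    and C1: "(\<Sum>X\<in>B1. real (card X) * real (card (recs Rv X))) \<le> real (num_edges Rv S1) / \<delta>"
    by auto
  from I2 have U2: "\<Union>B2 = S2" and N2: "\<forall>X\<in>B2. X \<noteq> {}"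
    and D2: "\<forall>X\<in>B2. \<forall>Y\<in>B2. X \<noteq> Y \<longrightarrow> X \<inter> Y = {}" and F2: "finite B2" and L2: "Suc d \<le> l2"
    and St2: "real (\<Sum>X\<in>B2. card (recs Rv X)) \<le> (1 + \<delta>) ^ (l2 - Suc d) * real (card (recs Rv S2))"
    and C2: "(\<Sum>X\<in>B2. real (card X) * real (card (recs Rv X))) \<le> real (num_edges Rv S2) / \<delta>"
    by auto
  have S12: "S1 \<inter> S2 = {}" "S = S1 \<union> S2" using S1 S2 by auto
  have UB: "\<Union>(B1 \<union> B2) = S" using U1 U2 S12 by auto
  have NB: "\<forall>X\<in>B1 \<union> B2. X \<noteq> {}" using N1 N2 by auto
  have DB: "\<forall>X\<in>B1 \<union> B2. \<forall>Y\<in>B1 \<union> B2. X \<noteq> Y \<longrightarrow> X \<inter> Y = {}"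
  proof (intro ballI impI)
    fix X Y assume X: "X \<in> B1 \<union> B2" and Y: "Y \<in> B1 \<union> B2" and XY: "X \<noteq> Y"
    have sub: "Z \<in> B1 \<Longrightarrow> Z \<subseteq> S1" "Z \<in> B2 \<Longrightarrow> Z \<subseteq> S2" for Z
      using U1 U2 by auto
    show "X \<inter> Y = {}"
    proof (cases "X \<in> B1")
      case True
      show ?thesis
      proof (cases "Y \<in> B1")
        case True
        thus ?thesis using \<open>X \<in> B1\<close> XY D1 by simp
      next
        case False
        hence "Y \<subseteq> S2" using Y sub by simp
        moreover have "X \<subseteq> S1" using True sub by simp
        ultimately show ?thesis using S12(1) by auto
      qed
    next
      case False
      hence XS: "X \<subseteq> S2" "X \<in> B2" using X sub by auto
      show ?thesis
      proof (cases "Y \<in> B2")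
        case True
        thus ?thesis using XS XY D2 by simp
      next
        case False
        hence "Y \<subseteq> S1" using Y sub by simp
        thus ?thesis using XS S12(1) by auto
      qed
    qed
  qed
  have BB: "B1 \<inter> B2 = {}"
  proof (rule ccontr)
    assume "B1 \<inter> B2 \<noteq> {}"
    then obtain X where "X \<in> B1" "X \<in> B2" by blast
    hence "X \<subseteq> S1" "X \<subseteq> S2" "X \<noteq> {}" using U1 U2 N1 by auto
    thus False using S12(1) by blast
  qed
  have LL: "d \<le> max l1 l2" using L1 by simp
  define q where "q = 1 + \<delta>"
  have q1: "1 \<le> q" using dpos unfolding q_def by simp
  define L where "L = max l1 l2"
  have finS: "finite S" "finite S1" "finite S2"
    using split.prems(1) SV1 finV finite_subset by blast+
  have finRS: "\<forall>v\<in>S. finite (Rv v)" "\<forall>v\<in>S1. finite (Rv v)" "\<forall>v\<in>S2. finite (Rv v)"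
    using split.prems(1) SV1 finR by auto
  have fr: "finite (recs Rv S1)" "finite (recs Rv S2)"
    using finite_recs finS finRS by blast+
  have recsU: "recs Rv S = recs Rv S1 \<union> recs Rv S2" using S12 unfolding recs_def by auto
  have cardU: "card (recs Rv S1) + card (recs Rv S2) = card (recs Rv S) + card (recs Rv S1 \<inter> recs Rv S2)"
    using card_Un_Int[OF fr] recsU by simp
  have aV: "a \<in> V" using split.hyps(3) split.prems(1) by auto
  have "recs Rv S1 \<inter> recs Rv S2 \<subseteq> Rv a \<inter> Rv b"
    using inter_sub[OF tree split.hyps(2,3,4) split.prems(2,1) subtree] split.hyps by simp
  hence "card (recs Rv S1 \<inter> recs Rv S2) \<le> weight Rv a b"
    unfolding weight_def using finR aV by (intro card_mono) auto
  hence capw: "real (card (recs Rv S1 \<inter> recs Rv S2)) \<le> \<delta> * real (card (recs Rv S))"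
    using split.hyps(5) by linarith
  have sumR: "real (card (recs Rv S1)) + real (card (recs Rv S2)) \<le> q * real (card (recs Rv S))"
  proof -
    have "real (card (recs Rv S1)) + real (card (recs Rv S2))
        = real (card (recs Rv S)) + real (card (recs Rv S1 \<inter> recs Rv S2))"
      using arg_cong[OF cardU, of real] by simp
    thus ?thesis using capw unfolding q_def by (simp add: algebra_simps)
  qed
  have p1: "q ^ (l1 - Suc d) \<le> q ^ (L - Suc d)" using q1 L_def by (intro power_increasing) auto
  have p2: "q ^ (l2 - Suc d) \<le> q ^ (L - Suc d)" using q1 L_def by (intro power_increasing) auto
  have St: "real (\<Sum>X\<in>B1 \<union> B2. card (recs Rv X)) \<le> q ^ (L - d) * real (card (recs Rv S))"
  proof -
    have "real (\<Sum>X\<in>B1 \<union> B2. card (recs Rv X))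
        = real (\<Sum>X\<in>B1. card (recs Rv X)) + real (\<Sum>X\<in>B2. card (recs Rv X))"
      using sum.union_disjoint[OF F1 F2 BB] by simp
    also have "\<dots> \<le> q ^ (L - Suc d) * real (card (recs Rv S1)) + q ^ (L - Suc d) * real (card (recs Rv S2))"
    proof (rule add_mono)
      show "real (\<Sum>X\<in>B1. card (recs Rv X)) \<le> q ^ (L - Suc d) * real (card (recs Rv S1))"
        using St1 mult_right_mono[OF p1, of "real (card (recs Rv S1))"] unfolding q_def by simp
      show "real (\<Sum>X\<in>B2. card (recs Rv X)) \<le> q ^ (L - Suc d) * real (card (recs Rv S2))"
        using St2 mult_right_mono[OF p2, of "real (card (recs Rv S2))"] unfolding q_def by simp
    qed
    also have "\<dots> = q ^ (L - Suc d) * (real (card (recs Rv S1)) + real (card (recs Rv S2)))"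
      by (simp add: algebra_simps)
    also have "\<dots> \<le> q ^ (L - Suc d) * (q * real (card (recs Rv S)))"
      using sumR q1 by (intro mult_left_mono) auto
    also have "\<dots> = q ^ (L - d) * real (card (recs Rv S))"
    proof -
      have "L - d = Suc (L - Suc d)" using L1 L_def by simp
      thus ?thesis by simp
    qed
    finally show ?thesis .
  qed
  have neS: "num_edges Rv S = num_edges Rv S1 + num_edges Rv S2"
    unfolding num_edges_def S12(2) using sum.union_disjoint[OF finS(2,3) S12(1)] by simp
  have Ch: "(\<Sum>X\<in>B1 \<union> B2. real (card X) * real (card (recs Rv X))) \<le> real (num_edges Rv S) / \<delta>"
  proof -
    have "(\<Sum>X\<in>B1 \<union> B2. real (card X) * real (card (recs Rv X)))
       = (\<Sum>X\<in>B1. real (card X) * real (card (recs Rv X))) + (\<Sum>X\<in>B2. real (card X) * real (card (recs Rv X)))"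
      using sum.union_disjoint[OF F1 F2 BB] by simp
    also have "\<dots> \<le> real (num_edges Rv S1) / \<delta> + real (num_edges Rv S2) / \<delta>"
      using C1 C2 by simp
    also have "\<dots> = real (num_edges Rv S) / \<delta>" using neS by (simp add: add_divide_distrib)
    finally show ?thesis .
  qed
  have St': "real (\<Sum>X\<in>B1 \<union> B2. card (recs Rv X)) \<le> (1 + \<delta>) ^ (max l1 l2 - d) * real (card (recs Rv S))"
    using St unfolding q_def L_def .
  have FB: "finite (B1 \<union> B2)" using F1 F2 by simp
  show ?case by (rule conjI[OF UB conjI[OF NB conjI[OF DB conjI[OF FB conjI[OF LL conjI[OF St' Ch]]]]]])
qed

theorem theorem2:
  fixes V :: "'v set" and Rv :: "'v \<Rightarrow> 'r set" and T :: "('v \<times> 'v) set" and rt :: 'v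
    and \<delta> :: real and B :: "'v set set" and l :: nat
  assumes finV: "finite V"
    and finR: "\<forall>v\<in>V. finite (Rv v)"
    and tree: "rooted_tree V T rt"
    and subtree: "\<forall>r\<in>recs Rv V. connected_in T {v \<in> V. r \<in> Rv v}"
    and delta: "0 < \<delta>" "\<delta> \<le> 1"
    and run: "lyresplit \<delta> T Rv V 0 B l"
  shows "\<Union>B = V \<and> (\<forall>X\<in>B. X \<noteq> {}) \<and> (\<forall>X\<in>B. \<forall>Y\<in>B. X \<noteq> Y \<longrightarrow> X \<inter> Y = {})
    \<and> real (\<Sum>X\<in>B. card (recs Rv X)) \<le> (1 + \<delta>) ^ l * real (card (recs Rv V))
    \<and> (1 / real (card V)) * (\<Sum>X\<in>B. real (card X) * real (card (recs Rv X)))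
        \<le> (1 / \<delta>) * (real (num_edges Rv V) / real (card V))"
proof -
  from tree have sub: "T \<subseteq> V \<times> V" and reach: "\<forall>v\<in>V. (rt, v) \<in> T\<^sup>*"
    by (auto simp: rooted_tree_def)
  have "T \<subseteq> und_edges T V" using sub by (auto simp: und_edges_def)
  hence "\<forall>y\<in>V. (rt, y) \<in> (und_edges T V)\<^sup>*" using reach rtrancl_mono by blast
  hence conn: "connected_in T V" by (rule conn_from)
  from main[OF run finV finR tree subtree delta(1) order.refl conn]
  have A: "\<Union>B = V \<and> (\<forall>X\<in>B. X \<noteq> {}) \<and> (\<forall>X\<in>B. \<forall>Y\<in>B. X \<noteq> Y \<longrightarrow> X \<inter> Y = {})"
    and St: "real (\<Sum>X\<in>B. card (recs Rv X)) \<le> (1 + \<delta>) ^ l * real (card (recs Rv V))"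
    and Ch: "(\<Sum>X\<in>B. real (card X) * real (card (recs Rv X))) \<le> real (num_edges Rv V) / \<delta>"
    by auto
  have "(1 / real (card V)) * (\<Sum>X\<in>B. real (card X) * real (card (recs Rv X)))
      \<le> (1 / real (card V)) * (real (num_edges Rv V) / \<delta>)"
    using Ch by (intro mult_left_mono) auto
  also have "\<dots> = (1 / \<delta>) * (real (num_edges Rv V) / real (card V))" by simp
  finally show ?thesis using A St by blast
qed
end
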